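(* Fix $K \ge 2$. Let a strategy for stochastic $K$-armed bandits admit a scale-free distribution-free regret bound $\Phi_{\mathrm{free}} : \mathbb{N} \to [0,+\infty)$, i.e., for all real numbers $m < M$, without knowing $m$ or $M$, it ensures $R_T(\underline\nu) \le (M-m)\,\Phi_{\mathrm{free}}(T)$ for every bandit problem $\underline\nu$ in $\mathcal{D}_{m,M}$ and every $T \ge 1$. Assume moreover that $\Phi_{\mathrm{free}}(T) = o(T)$ as $T \to \infty$. Then for every bandit problem $\underline\nu = (\nu_a)_{a\in[K]}$ in $\mathcal{D}_{-,+}$, \[ \liminf_{T\to\infty} \frac{R_T(\underline\nu)}{T/\Phi_{\mathrm{free}}(T)} \ \ge\ \frac{1}{16}\sum_{a=1}^K \Delta_a . \]
   Context: Stochastic $K$-armed bandit: each arm $a \in [K]=\{1,\dots,K\}$ has a distribution $\nu_a$ on $\mathbb{R}$ with a first moment; $\mu_a$ is its mean, $\mu^\star = \max_a \mu_a$, and $\Delta_a = \mu^\star - \mu_a$. At round $t \ge 1$ the player picks $A_t \in [K]$ as a measurable function of $(U_0, Z_1, U_1, \dots, Z_{t-1}, U_{t-1})$, where $U_0, U_1, \dots$ are i.i.d. uniform on $[0,1]$ and independent of everything else, and receives and observes $Z_t$ drawn from $\nu_{A_t}$ independently given $A_t$. The (expected) regret is $R_T(\underline\nu) = T\mu^\star - \mathbb{E}[\sum_{t=1}^T Z_t] = \sum_a \Delta_a\,\mathbb{E}[N_a(T)]$, where $N_a(T)$ is the number of pulls of arm $a$ in rounds $1,\dots,T$. For real $m<M$,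 $\mathcal{D}_{m,M}$ is the set of probability distributions supported on $[m,M]$, and $\mathcal{D}_{-,+} = \bigcup_{m<M} \mathcal{D}_{m,M}$ (bounded distributions with unknown range). A bandit problem in a model $\mathcal{D}$ is a vector $(\nu_a)_{a\in[K]}$ with each $\nu_a\in\mathcal{D}$. *)

theory Defs
  imports "HOL-Probability.Probability" "HOL-Library.Landau_Symbols"
begin

text \<open>Histories: h 0 = (0, U_0) and h s = (Z_s, U_s) for s \<ge> 1.
  Arms are 1..K.\<close>

definition HS :: "(nat \<Rightarrow> real \<times> real) measure" where
  "HS = PiM UNIV (\<lambda>_. borel)"

definition unif01 :: "real measure" where
  "unif01 = uniform_measure lborel {0..1}"

definition strategy :: "nat \<Rightarrow> (nat \<Rightarrow> (nat \<Rightarrow> real \<times> real) \<Rightarrow> nat) \<Rightarrow> bool" where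
  "strategy K \<pi> \<longleftrightarrow> (\<forall>t\<ge>1. \<pi> t \<in> HS \<rightarrow>\<^sub>M count_space UNIV
       \<and> (\<forall>h. \<pi> t h \<in> {1..K})
       \<and> (\<forall>h h'. (\<forall>s<t. h s = h' s) \<longrightarrow> \<pi> t h = \<pi> t h'))"

primrec hist_law :: "(nat \<Rightarrow> (nat \<Rightarrow> real \<times> real) \<Rightarrow> nat) \<Rightarrow> (nat \<Rightarrow> real measure)
    \<Rightarrow> nat \<Rightarrow> (nat \<Rightarrow> real \<times> real) measure" where
  "hist_law \<pi> \<nu> 0 = distr unif01 HS (\<lambda>u. (\<lambda>s. (0, if s = 0 then u else 0)))"
| "hist_law \<pi> \<nu> (Suc t) = hist_law \<pi> \<nu> t \<bind>
     (\<lambda>h. distr (\<nu> (\<pi> (Suc t) h) \<Otimes>\<^sub>M unif01) HS (\<lambda>zu. h(Suc t := zu)))"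

definition mean :: "real measure \<Rightarrow> real" where
  "mean P = (\<integral>x. x \<partial>P)"

definition best_mean :: "nat \<Rightarrow> (nat \<Rightarrow> real measure) \<Rightarrow> real" where
  "best_mean K \<nu> = Max ((\<lambda>a. mean (\<nu> a)) ` {1..K})"

definition gap :: "nat \<Rightarrow> (nat \<Rightarrow> real measure) \<Rightarrow> nat \<Rightarrow> real" where
  "gap K \<nu> a = best_mean K \<nu> - mean (\<nu> a)"

definition regret :: "nat \<Rightarrow> (nat \<Rightarrow> (nat \<Rightarrow> real \<times> real) \<Rightarrow> nat) \<Rightarrow> (nat \<Rightarrow> real measure)
    \<Rightarrow> nat \<Rightarrow> real" where
  "regret K \<pi> \<nu> T = real T * best_mean K \<nu>
     - (\<integral>h. (\<Sum>t\<in>{1..T}. fst (h t)) \<partial>(hist_law \<pi> \<nu> T))"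

definition dist_in :: "real \<Rightarrow> real \<Rightarrow> real measure \<Rightarrow> bool" where
  "dist_in m M P \<longleftrightarrow> prob_space P \<and> sets P = sets borel \<and> measure P {m..M} = 1"

definition bandit_in :: "real \<Rightarrow> real \<Rightarrow> nat \<Rightarrow> (nat \<Rightarrow> real measure) \<Rightarrow> bool" where
  "bandit_in m M K \<nu> \<longleftrightarrow> (\<forall>a\<in>{1..K}. dist_in m M (\<nu> a))"

definition bandit_bounded :: "nat \<Rightarrow> (nat \<Rightarrow> real measure) \<Rightarrow> bool" where
  "bandit_bounded K \<nu> \<longleftrightarrow> (\<exists>m M. m < M \<and> bandit_in m M K \<nu>)"

definition scale_free_bound :: "nat \<Rightarrow> (nat \<Rightarrow> (nat \<Rightarrow> real \<times> real) \<Rightarrow> nat) \<Rightarrow> (nat \<Rightarrow> real) \<Rightarrow> bool" where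
  "scale_free_bound K \<pi> \<Phi> \<longleftrightarrow> (\<forall>T. \<Phi> T \<ge> 0) \<and>
     (\<forall>m M \<nu> T. m < M \<longrightarrow> bandit_in m M K \<nu> \<longrightarrow> T \<ge> 1 \<longrightarrow>
        regret K \<pi> \<nu> T \<le> (M - m) * \<Phi> T)"

end

theory Submission
  imports Defs
begin

definition arms_ok :: "nat \<Rightarrow> (nat \<Rightarrow> real measure) \<Rightarrow> bool" where
  "arms_ok K \<nu> \<longleftrightarrow> (\<forall>k\<in>{1..K}. \<nu> k \<in> space (prob_algebra borel))"

lemma unif01_prob: "prob_space unif01" and sets_unif01[measurable_cong]: "sets unif01 = sets borel"
  unfolding unif01_def by (auto intro!: prob_space_uniform_measure)

lemma space_HS: "space HS = UNIV"
  unfolding HS_def by (simp add: space_PiM)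

lemma upd_measurable[measurable]:
  "(\<lambda>(h, zu). h(s := zu)) \<in> HS \<Otimes>\<^sub>M (borel \<Otimes>\<^sub>M borel) \<rightarrow>\<^sub>M HS"
proof -
  have "(\<lambda>x. (case x of (h, zu) \<Rightarrow> h(s := zu))) \<in> HS \<Otimes>\<^sub>M (borel \<Otimes>\<^sub>M borel) \<rightarrow>\<^sub>M PiM UNIV (\<lambda>_. borel)"
  proof (rule measurable_PiM_single')
    fix i :: nat
    have "(\<lambda>x::(nat \<Rightarrow> real \<times> real) \<times> (real \<times> real). (case x of (h, zu) \<Rightarrow> h(s := zu)) i) = (\<lambda>x. if i = s then snd x else fst x i)"
      by (auto simp: fun_eq_iff)
    moreover have "(\<lambda>x::(nat \<Rightarrow> real \<times> real) \<times> (real \<times> real). if i = s then snd x else fst x i) \<in> HS \<Otimes>\<^sub>M (borel \<Otimes>\<^sub>M borel) \<rightarrow>\<^sub>M borel"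
      unfolding HS_def borel_prod by measurable
    ultimately show "(\<lambda>x. (case x of (h, zu) \<Rightarrow> h(s := zu)) i) \<in> HS \<Otimes>\<^sub>M (borel \<Otimes>\<^sub>M borel) \<rightarrow>\<^sub>M borel" by simp
  qed (auto simp: space_pair_measure)
  then show ?thesis unfolding HS_def .
qed

lemma pair_unif_in:
  assumes "N \<in> space (prob_algebra (borel::real measure))"
  shows "N \<Otimes>\<^sub>M unif01 \<in> space (prob_algebra (borel \<Otimes>\<^sub>M borel))"
proof -
  interpret N: prob_space N using assms by (simp add: space_prob_algebra)
  interpret U: prob_space unif01 by (rule unif01_prob)
  interpret pair_prob_space N unif01 ..
  have "sets N = sets borel" using assms by (simp add: space_prob_algebra)
  then show ?thesis
    by (simp add: space_prob_algebra prob_space_axioms sets_unif01 cong: sets_pair_measure_cong)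
qed

lemma init_measurable: "(\<lambda>u::real. (\<lambda>s::nat. (0::real, if s = 0 then u else 0))) \<in> borel \<rightarrow>\<^sub>M HS"
  unfolding HS_def by (rule measurable_PiM_single') auto

definition clip :: "real \<Rightarrow> real \<Rightarrow> real \<Rightarrow> real" where
  "clip m M x = max m (min M x)"

lemma clip_meas[measurable]: "clip m M \<in> borel_measurable borel"
  unfolding clip_def by measurable

lemma clip_bound: "\<bar>clip m M x\<bar> \<le> \<bar>m\<bar> + \<bar>M\<bar>"
  unfolding clip_def by auto

lemma bandit_ok: "bandit_in m M K \<nu> \<Longrightarrow> arms_ok K \<nu>"
  unfolding bandit_in_def arms_ok_def dist_in_def by (auto simp: space_prob_algebra)

lemma dist_AE: assumes "dist_in m M N" shows "AE x in N. x \<in> {m..M}"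
proof -
  interpret prob_space N using assms unfolding dist_in_def by auto
  show ?thesis by (rule AE_prob_1) (use assms in \<open>simp add: dist_in_def\<close>)
qed

lemma mean_clip:
  assumes "dist_in m M N"
  shows "mean N = (\<integral>x. clip m M x \<partial>N)"
proof -
  have sN: "sets N = sets borel" using assms unfolding dist_in_def by auto
  show ?thesis unfolding mean_def
    apply (rule integral_cong_AE)
    apply (simp add: measurable_cong_sets[OF sN refl])
    apply (simp add: measurable_cong_sets[OF sN refl])
    using dist_AE[OF assms] by eventually_elim (auto simp: clip_def)
qed

lemma mean_bounds:
  assumes "dist_in m M N" "m \<le> M"
  shows "m \<le> mean N" "mean N \<le> M"
proof -
  interpret prob_space N using assms unfolding dist_in_def by auto
  have sN: "sets N = sets borel" using assms unfolding dist_in_def by auto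
  have int: "integrable N (clip m M)"
    by (rule integrable_const_bound[where B="\<bar>m\<bar> + \<bar>M\<bar>"]) (auto simp: clip_bound measurable_cong_sets[OF sN refl])
  have "(\<integral>x. m \<partial>N) \<le> (\<integral>x. clip m M x \<partial>N)"
    apply (rule integral_mono) apply simp apply (rule int) apply (simp add: clip_def) done
  then show "m \<le> mean N" using mean_clip[OF assms(1)] by (simp add: prob_space)
  have "(\<integral>x. clip m M x \<partial>N) \<le> (\<integral>x. M \<partial>N)"
    apply (rule integral_mono) apply (rule int) apply simp using assms(2) apply (simp add: clip_def) done
  then show "mean N \<le> M" using mean_clip[OF assms(1)] by (simp add: prob_space)
qed

lemma prod_one_minus_ge:
  fixes x :: "nat \<Rightarrow> real"
  assumes "finite S" "\<And>t. t \<in> S \<Longrightarrow> 0 \<le> x t \<and> x t \<le> 1"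
  shows "1 - (\<Sum>t\<in>S. x t) \<le> (\<Prod>t\<in>S. 1 - x t)"
  using assms
proof (induction S rule: finite_induct)
  case empty
  then show ?case by simp
next
  case (insert y S)
  have IH: "1 - (\<Sum>t\<in>S. x t) \<le> (\<Prod>t\<in>S. 1 - x t)" using insert by auto
  have xy: "0 \<le> x y" "x y \<le> 1" using insert by auto
  have S0: "0 \<le> (\<Sum>t\<in>S. x t)" using insert by (intro sum_nonneg) auto
  have "1 - (\<Sum>t\<in>insert y S. x t) = 1 - x y - (\<Sum>t\<in>S. x t)" using insert by simp
  also have "\<dots> \<le> (1 - x y) * (1 - (\<Sum>t\<in>S. x t))" using xy S0 by (simp add: algebra_simps)
  also have "\<dots> \<le> (1 - x y) * (\<Prod>t\<in>S. 1 - x t)" using IH xy by (intro mult_left_mono) auto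
  also have "\<dots> = (\<Prod>t\<in>insert y S. 1 - x t)" using insert by simp
  finally show ?case .
qed

definition mixk :: "real \<Rightarrow> real measure \<Rightarrow> bool \<Rightarrow> real measure" where
  "mixk x N b = (if b then return borel x else N)"

definition mix :: "real \<Rightarrow> real \<Rightarrow> real measure \<Rightarrow> real measure" where
  "mix \<epsilon> x N = measure_pmf (bernoulli_pmf \<epsilon>) \<bind> mixk x N"

lemma mixk_meas: "N \<in> space (prob_algebra borel) \<Longrightarrow> mixk x N \<in> measure_pmf p \<rightarrow>\<^sub>M prob_algebra borel"
  by (auto simp: mixk_def space_prob_algebra prob_space_return)

lemma pmf_in: "measure_pmf p \<in> space (prob_algebra (measure_pmf p))"
  by (simp add: space_prob_algebra measure_pmf.prob_space_axioms)

lemma mix_in: "N \<in> space (prob_algebra borel) \<Longrightarrow> mix \<epsilon> x N \<in> space (prob_algebra borel)"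
  using prob_space_bind'[OF pmf_in mixk_meas] sets_bind'[OF pmf_in mixk_meas]
  by (simp add: mix_def space_prob_algebra)

lemma mix_emeasure:
  assumes N: "N \<in> space (prob_algebra borel)" and A: "A \<in> sets borel" and e: "0 \<le> \<epsilon>" "\<epsilon> \<le> 1"
  shows "emeasure (mix \<epsilon> x N) A = ennreal \<epsilon> * indicator A x + ennreal (1 - \<epsilon>) * emeasure N A"
proof -
  have "emeasure (mix \<epsilon> x N) A = (\<integral>\<^sup>+b. emeasure (mixk x N b) A \<partial>measure_pmf (bernoulli_pmf \<epsilon>))"
    unfolding mix_def by (rule emeasure_bind_prob_algebra[OF pmf_in mixk_meas[OF N] A])
  also have "\<dots> = ennreal \<epsilon> * indicator A x + ennreal (1 - \<epsilon>) * emeasure N A"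
    using e A by (simp add: nn_integral_measure_pmf nn_integral_count_space_finite UNIV_bool mixk_def)
  finally show ?thesis .
qed

lemma mix_nn:
  assumes N: "N \<in> space (prob_algebra borel)" and H: "H \<in> borel_measurable borel" and e: "0 \<le> \<epsilon>" "\<epsilon> \<le> 1"
  shows "(\<integral>\<^sup>+z. H z \<partial>mix \<epsilon> x N) = ennreal \<epsilon> * H x + ennreal (1 - \<epsilon>) * (\<integral>\<^sup>+z. H z \<partial>N)"
proof -
  have "(\<integral>\<^sup>+z. H z \<partial>mix \<epsilon> x N) = (\<integral>\<^sup>+b. (\<integral>\<^sup>+z. H z \<partial>mixk x N b) \<partial>measure_pmf (bernoulli_pmf \<epsilon>))"
    unfolding mix_def by (rule nn_integral_bind[OF H measurable_prob_algebraD[OF mixk_meas[OF N]]])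
  also have "\<dots> = ennreal \<epsilon> * H x + ennreal (1 - \<epsilon>) * (\<integral>\<^sup>+z. H z \<partial>N)"
    using e H by (simp add: nn_integral_measure_pmf nn_integral_count_space_finite UNIV_bool mixk_def nn_integral_return)
  finally show ?thesis .
qed

lemma mix_int:
  fixes g :: "real \<Rightarrow> real"
  assumes N: "N \<in> space (prob_algebra borel)" and g: "g \<in> borel_measurable borel" and B: "\<And>z. \<bar>g z\<bar> \<le> B"
    and e: "0 \<le> \<epsilon>" "\<epsilon> \<le> 1"
  shows "(\<integral>z. g z \<partial>mix \<epsilon> x N) = \<epsilon> * g x + (1 - \<epsilon>) * (\<integral>z. g z \<partial>N)"
proof -
  have "(\<integral>z. g z \<partial>mix \<epsilon> x N) = (\<integral>b. (\<integral>z. g z \<partial>mixk x N b) \<partial>measure_pmf (bernoulli_pmf \<epsilon>))"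
    unfolding mix_def
    apply (rule integral_bind[where K=borel and B=B and B'=1])
    using g B measurable_prob_algebraD[OF mixk_meas[OF N]] apply auto
    apply (rule AE_I2)
    using N by (auto simp: mixk_def space_prob_algebra prob_space.emeasure_space_1)
  also have "\<dots> = (\<Sum>b\<in>UNIV. pmf (bernoulli_pmf \<epsilon>) b *\<^sub>R (\<integral>z. g z \<partial>mixk x N b))"
    by (rule integral_measure_pmf) auto
  also have "\<dots> = \<epsilon> * g x + (1 - \<epsilon>) * (\<integral>z. g z \<partial>N)"
    using e g by (simp add: UNIV_bool mixk_def integral_return)
  finally show ?thesis .
qed

lemma dist_widen:
  assumes "dist_in m M N" "M \<le> x"
  shows "dist_in m x N"
proof -
  interpret prob_space N using assms unfolding dist_in_def by auto
  have "measure N {m..M} \<le> measure N {m..x}"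
    using assms by (intro finite_measure_mono) (auto simp: dist_in_def)
  then show ?thesis using assms prob_le_1[of "{m..x}"] unfolding dist_in_def by auto
qed

lemma mix_dist:
  assumes d: "dist_in m M N" and mx: "m \<le> M" "M \<le> x" and e: "0 \<le> \<epsilon>" "\<epsilon> \<le> 1"
  shows "dist_in m x (mix \<epsilon> x N)"
proof -
  have N: "N \<in> space (prob_algebra borel)" using d unfolding dist_in_def by (simp add: space_prob_algebra)
  have dx: "dist_in m x N" by (rule dist_widen[OF d mx(2)])
  interpret N: prob_space N using d unfolding dist_in_def by auto
  have "emeasure N {m..x} = 1"
    using dx unfolding dist_in_def by (simp add: N.emeasure_eq_measure)
  then have "emeasure (mix \<epsilon> x N) {m..x} = ennreal \<epsilon> + ennreal (1 - \<epsilon>)"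
    using mix_emeasure[OF N _ e, of "{m..x}" x] mx by simp
  also have "\<dots> = 1" using e by (simp add: ennreal_plus[symmetric] del: ennreal_plus)
  finally have em: "emeasure (mix \<epsilon> x N) {m..x} = 1" .
  have "mix \<epsilon> x N \<in> space (prob_algebra borel)" by (rule mix_in[OF N])
  then show ?thesis unfolding dist_in_def using em
    by (auto simp: space_prob_algebra measure_def)
qed

lemma mix_mean:
  assumes d: "dist_in m M N" and mx: "m \<le> M" "M \<le> x" and e: "0 \<le> \<epsilon>" "\<epsilon> \<le> 1"
  shows "mean (mix \<epsilon> x N) = \<epsilon> * x + (1 - \<epsilon>) * mean N"
proof -
  have N: "N \<in> space (prob_algebra borel)" using d unfolding dist_in_def by (simp add: space_prob_algebra)
  have dx: "dist_in m x N" by (rule dist_widen[OF d mx(2)])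
  have "mean (mix \<epsilon> x N) = (\<integral>z. clip m x z \<partial>mix \<epsilon> x N)"
    by (rule mean_clip[OF mix_dist[OF d mx e]])
  also have "\<dots> = \<epsilon> * clip m x x + (1 - \<epsilon>) * (\<integral>z. clip m x z \<partial>N)"
    by (rule mix_int[OF N clip_meas clip_bound e])
  also have "\<dots> = \<epsilon> * x + (1 - \<epsilon>) * mean N"
    using mean_clip[OF dx] mx by (simp add: clip_def)
  finally show ?thesis .
qed

locale strat =
  fixes K :: nat and \<pi> :: "nat \<Rightarrow> (nat \<Rightarrow> real \<times> real) \<Rightarrow> nat"
  assumes strat: "strategy K \<pi>"
begin

definition ker :: "(nat \<Rightarrow> real measure) \<Rightarrow> nat \<Rightarrow> (nat \<Rightarrow> real \<times> real) \<Rightarrow> (nat \<Rightarrow> real \<times> real) measure" where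
  "ker \<nu> t h = distr (\<nu> (\<pi> (Suc t) h) \<Otimes>\<^sub>M unif01) HS (\<lambda>zu. h(Suc t := zu))"

lemma ker_eq: "ker \<nu> t = (\<lambda>h. distr (\<nu> (\<pi> (Suc t) h) \<Otimes>\<^sub>M unif01) HS (\<lambda>zu. h(Suc t := zu)))"
  by (rule ext) (simp add: ker_def)

lemma hist_Suc: "hist_law \<pi> \<nu> (Suc t) = hist_law \<pi> \<nu> t \<bind> ker \<nu> t"
  by (simp add: ker_eq)

lemma pi_range: "t \<ge> 1 \<Longrightarrow> \<pi> t h \<in> {1..K}"
  using strat unfolding strategy_def by blast

lemma pi_dep: "t \<ge> 1 \<Longrightarrow> (\<And>s. s < t \<Longrightarrow> h s = h' s) \<Longrightarrow> \<pi> t h = \<pi> t h'"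
  using strat unfolding strategy_def by blast

lemma pi_meas_UNIV: "t \<ge> 1 \<Longrightarrow> \<pi> t \<in> HS \<rightarrow>\<^sub>M count_space UNIV"
  using strat unfolding strategy_def by blast

lemma pi_meas: "t \<ge> 1 \<Longrightarrow> \<pi> t \<in> HS \<rightarrow>\<^sub>M count_space {1..K}"
proof -
  assume t: "t \<ge> 1"
  have m: "\<pi> t \<in> HS \<rightarrow>\<^sub>M count_space UNIV" using pi_meas_UNIV[OF t] .
  show ?thesis
    unfolding measurable_count_space_eq2_countable
  proof
    show "\<pi> t \<in> space HS \<rightarrow> {1..K}" using pi_range[OF t] by blast
    show "\<forall>a\<in>{1..K}. \<pi> t -` {a} \<inter> space HS \<in> sets HS"
      using measurable_sets[OF m, of "{_}"] by auto
  qed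
qed

lemma ker_k_meas:
  assumes in1: "N \<in> space (prob_algebra (borel \<Otimes>\<^sub>M borel))"
  shows "(\<lambda>h. distr N HS (\<lambda>zu. h(s := zu))) \<in> HS \<rightarrow>\<^sub>M prob_algebra HS"
proof (rule measurable_prob_algebraI)
  have in2: "N \<in> space (subprob_algebra (borel \<Otimes>\<^sub>M borel))"
    using in1 by (auto simp: space_prob_algebra space_subprob_algebra prob_space_imp_subprob_space)
  show "(\<lambda>h. distr N HS (\<lambda>zu. h(s := zu))) \<in> HS \<rightarrow>\<^sub>M subprob_algebra HS"
    apply (rule measurable_distr2[where f="\<lambda>h zu. h(s := zu)"])
    apply (rule upd_measurable)
    apply (rule measurable_const[OF in2])
    done
  fix h assume "h \<in> space HS"
  have sN: "sets N = sets (borel \<Otimes>\<^sub>M borel)" using in1 by (simp add: space_prob_algebra)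
  have "(\<lambda>zu. h(s := zu)) \<in> (borel \<Otimes>\<^sub>M borel) \<rightarrow>\<^sub>M HS"
    using measurable_Pair2[OF upd_measurable, of h s] by (simp add: space_HS)
  then have m: "(\<lambda>zu. h(s := zu)) \<in> N \<rightarrow>\<^sub>M HS"
    using measurable_cong_sets[OF sN refl] by blast
  have "prob_space N" using in1 by (simp add: space_prob_algebra)
  then show "prob_space (distr N HS (\<lambda>zu. h(s := zu)))"
    using m by (rule prob_space.prob_space_distr)
qed

lemma ker_meas:
  assumes "arms_ok K \<nu>"
  shows "ker \<nu> t \<in> HS \<rightarrow>\<^sub>M prob_algebra HS"
proof -
  have k: "(\<lambda>h. distr (\<nu> k \<Otimes>\<^sub>M unif01) HS (\<lambda>zu. h(Suc t := zu))) \<in> HS \<rightarrow>\<^sub>M prob_algebra HS"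
    if k: "k \<in> {1..K}" for k
    apply (rule ker_k_meas)
    apply (rule pair_unif_in)
    using assms k unfolding arms_ok_def by blast
  have pm: "\<pi> (Suc t) \<in> HS \<rightarrow>\<^sub>M count_space {1..K}" by (rule pi_meas) simp
  show ?thesis unfolding ker_eq
    apply (rule measurable_compose_countable'[where f="\<lambda>k h. distr (\<nu> k \<Otimes>\<^sub>M unif01) HS (\<lambda>zu. h(Suc t := zu))", OF k pm])
    apply auto
    done
qed

lemma P_in:
  assumes "arms_ok K \<nu>"
  shows "hist_law \<pi> \<nu> t \<in> space (prob_algebra HS)"
proof (induction t)
  case 0
  have "prob_space (distr unif01 HS (\<lambda>u. (\<lambda>s. (0, if s = 0 then u else 0))))"
    using unif01_prob init_measurable
    by (intro prob_space.prob_space_distr) (auto cong: measurable_cong_sets simp: sets_unif01)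
  then show ?case by (simp add: space_prob_algebra)
next
  case (Suc t)
  then show ?case unfolding hist_Suc
    using prob_space_bind'[OF Suc ker_meas[OF assms]] sets_bind'[OF Suc ker_meas[OF assms]]
    by (simp add: space_prob_algebra)
qed

lemma P_prob: "arms_ok K \<nu> \<Longrightarrow> prob_space (hist_law \<pi> \<nu> t)"
  and P_sets: "arms_ok K \<nu> \<Longrightarrow> sets (hist_law \<pi> \<nu> t) = sets HS"
  using P_in[of \<nu> t] by (auto simp: space_prob_algebra)


abbreviation P where "P \<nu> t \<equiv> hist_law \<pi> \<nu> t"

lemma armN_in:
  assumes "arms_ok K \<nu>"
  shows "\<nu> (\<pi> (Suc t) h) \<Otimes>\<^sub>M unif01 \<in> space (prob_algebra (borel \<Otimes>\<^sub>M borel))"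
  apply (rule pair_unif_in)
  using assms pi_range[of "Suc t" h] unfolding arms_ok_def by auto

lemma arm_in:
  assumes "arms_ok K \<nu>" "t \<ge> 1"
  shows "\<nu> (\<pi> t h) \<in> space (prob_algebra borel)"
  using assms pi_range[of t h] unfolding arms_ok_def by blast

lemma upd_meas_N:
  assumes in1: "N \<in> space (prob_algebra (borel \<Otimes>\<^sub>M borel))"
  shows "(\<lambda>zu. h(s := zu)) \<in> N \<rightarrow>\<^sub>M HS"
proof -
  have sN: "sets N = sets (borel \<Otimes>\<^sub>M borel)" using in1 by (simp add: space_prob_algebra)
  have "(\<lambda>zu. h(s := zu)) \<in> (borel \<Otimes>\<^sub>M borel) \<rightarrow>\<^sub>M HS"
    using measurable_Pair2[OF upd_measurable, of h s] by (simp add: space_HS)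
  then show ?thesis
    using measurable_cong_sets[OF sN refl] by blast
qed

lemma step_int:
  fixes f :: "_ \<Rightarrow> real" and B :: real
  assumes ok: "arms_ok K \<nu>" and f[measurable]: "f \<in> borel_measurable HS" and B: "\<And>h. \<bar>f h\<bar> \<le> B"
  shows "(\<integral>h. f h \<partial>P \<nu> (Suc t)) =
    (\<integral>h. (\<integral>zu. f (h(Suc t := zu)) \<partial>(\<nu> (\<pi> (Suc t) h) \<Otimes>\<^sub>M unif01)) \<partial>P \<nu> t)"
proof -
  interpret Pt: prob_space "P \<nu> t" by (rule P_prob[OF ok])
  have km: "ker \<nu> t \<in> P \<nu> t \<rightarrow>\<^sub>M subprob_algebra HS"
    using measurable_prob_algebraD[OF ker_meas[OF ok]] measurable_cong_sets[OF P_sets[OF ok] refl] by blast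
  have "(\<integral>h. f h \<partial>P \<nu> (Suc t)) = (\<integral>h. integral\<^sup>L (ker \<nu> t h) f \<partial>P \<nu> t)"
    unfolding hist_Suc
    apply (rule integral_bind[where B=B and B'=1 and K=HS])
    using f B km apply (auto simp: space_HS Pt.finite_measure_axioms)
    apply (rule AE_I2)
    using measurable_space[OF ker_meas[OF ok]]
    by (simp add: space_prob_algebra space_HS prob_space.emeasure_space_1)
  also have "\<dots> = (\<integral>h. (\<integral>zu. f (h(Suc t := zu)) \<partial>(\<nu> (\<pi> (Suc t) h) \<Otimes>\<^sub>M unif01)) \<partial>P \<nu> t)"
    unfolding ker_def
    by (rule Bochner_Integration.integral_cong[OF refl], rule integral_distr[OF upd_meas_N[OF armN_in[OF ok]] f])
  finally show ?thesis .
qed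

lemma int_bounded:
  fixes f :: "_ \<Rightarrow> real" and B :: real
  assumes ok: "arms_ok K \<nu>" and f[measurable]: "f \<in> borel_measurable HS" and B: "\<And>h. \<bar>f h\<bar> \<le> B"
  shows "integrable (P \<nu> t) f"
proof -
  interpret Pt: prob_space "P \<nu> t" by (rule P_prob[OF ok])
  show ?thesis
    apply (rule Pt.integrable_const_bound[where B=B])
    using B apply simp
    using f by (subst measurable_cong_sets[OF P_sets[OF ok] refl])
qed

lemma inv_int:
  fixes f :: "_ \<Rightarrow> real" and B :: real
  assumes ok: "arms_ok K \<nu>" and f[measurable]: "f \<in> borel_measurable HS" and B: "\<And>h. \<bar>f h\<bar> \<le> B"
    and dep: "\<And>h h'. (\<And>i. i \<le> s \<Longrightarrow> h i = h' i) \<Longrightarrow> f h = f h'"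
    and sT: "s \<le> T"
  shows "(\<integral>h. f h \<partial>P \<nu> T) = (\<integral>h. f h \<partial>P \<nu> s)"
  using sT
proof (induction T rule: dec_induct)
  case base
  then show ?case by simp
next
  case (step T)
  have "(\<integral>h. f h \<partial>P \<nu> (Suc T)) =
    (\<integral>h. (\<integral>zu. f (h(Suc T := zu)) \<partial>(\<nu> (\<pi> (Suc T) h) \<Otimes>\<^sub>M unif01)) \<partial>P \<nu> T)"
    by (rule step_int[OF ok f B])
  also have "\<dots> = (\<integral>h. f h \<partial>P \<nu> T)"
  proof (rule Bochner_Integration.integral_cong[OF refl])
    fix h
    have "f (h(Suc T := zu)) = f h" for zu
      by (rule dep) (use step in auto)
    moreover have ps: "prob_space (\<nu> (\<pi> (Suc T) h) \<Otimes>\<^sub>M unif01)"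
      using armN_in[OF ok, of T h] by (simp add: space_prob_algebra)
    ultimately show "(\<integral>zu. f (h(Suc T := zu)) \<partial>(\<nu> (\<pi> (Suc T) h) \<Otimes>\<^sub>M unif01)) = f h"
      by (simp add: prob_space.prob_space[OF ps])
  qed
  finally show ?case using step by simp
qed

lemma fst_int:
  fixes g :: "real \<Rightarrow> real"
  assumes N: "N \<in> space (prob_algebra (borel::real measure))" and g[measurable]: "g \<in> borel_measurable (borel::real measure)"
  shows "(\<integral>zu. g (fst zu) \<partial>(N \<Otimes>\<^sub>M unif01)) = (\<integral>z. g z \<partial>N)"
proof -
  interpret U: prob_space unif01 by (rule unif01_prob)
  have sN: "sets N = sets borel" using N by (simp add: space_prob_algebra)
  have "(\<integral>z. g z \<partial>N) = (\<integral>z. g z \<partial>distr (N \<Otimes>\<^sub>M unif01) N fst)"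
    by (simp add: U.distr_pair_fst)
  also have "\<dots> = (\<integral>zu. g (fst zu) \<partial>(N \<Otimes>\<^sub>M unif01))"
    by (rule integral_distr[OF measurable_fst]) (simp add: measurable_cong_sets[OF sN refl])
  finally show ?thesis by simp
qed


lemma comp_pi_meas: "t \<ge> 1 \<Longrightarrow> (\<lambda>h. g (\<pi> t h) :: real) \<in> borel_measurable HS"
  by (rule measurable_compose[OF pi_meas_UNIV]) auto

lemma coord_meas: "(g :: real \<Rightarrow> real) \<in> borel_measurable borel \<Longrightarrow> (\<lambda>h. g (fst (h t))) \<in> borel_measurable HS"
proof -
  assume g: "g \<in> borel_measurable borel"
  have c: "(\<lambda>h. h t) \<in> HS \<rightarrow>\<^sub>M (borel :: (real \<times> real) measure)"
    unfolding HS_def by (rule measurable_component_singleton) simp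
  have f: "fst \<in> (borel :: (real \<times> real) measure) \<rightarrow>\<^sub>M borel"
    using measurable_fst[of "borel::real measure" "borel::real measure", unfolded borel_prod] .
  show ?thesis
    using measurable_compose[OF measurable_compose[OF c f] g] by simp
qed

lemma int_bound_prob:
  fixes g :: "real \<Rightarrow> real"
  assumes "prob_space N" "\<And>x. \<bar>g x\<bar> \<le> B"
  shows "\<bar>\<integral>x. g x \<partial>N\<bar> \<le> B"
proof -
  interpret prob_space N by fact
  have "\<bar>\<integral>x. g x \<partial>N\<bar> \<le> (\<integral>x. \<bar>g x\<bar> \<partial>N)" by (rule integral_abs_bound)
  also have "\<dots> \<le> (\<integral>x. B \<partial>N)"
    using assms(2) by (intro integral_mono') (auto intro: order_trans[OF abs_ge_zero])
  finally show ?thesis by (simp add: prob_space)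
qed

lemma marg_t:
  fixes g :: "real \<Rightarrow> real" and B :: real
  assumes ok: "arms_ok K \<nu>" and g[measurable]: "g \<in> borel_measurable borel" and B: "\<And>x. \<bar>g x\<bar> \<le> B"
    and t: "1 \<le> t" "t \<le> T"
  shows "(\<integral>h. g (fst (h t)) \<partial>P \<nu> T) = (\<integral>h. (\<integral>z. g z \<partial>\<nu> (\<pi> t h)) \<partial>P \<nu> T)"
proof -
  obtain s where s: "t = Suc s" using t by (cases t) auto
  have fm: "(\<lambda>h. g (fst (h t))) \<in> borel_measurable HS" by (rule coord_meas[OF g])
  have Gm: "(\<lambda>h. (\<integral>z. g z \<partial>\<nu> (\<pi> t h))) \<in> borel_measurable HS"
    by (rule comp_pi_meas[OF t(1)])
  have GB: "\<bar>\<integral>z. g z \<partial>\<nu> (\<pi> t h)\<bar> \<le> B" for h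
    using arm_in[OF ok t(1), of h] B by (intro int_bound_prob) (auto simp: space_prob_algebra)
  have "(\<integral>h. g (fst (h t)) \<partial>P \<nu> T) = (\<integral>h. g (fst (h t)) \<partial>P \<nu> t)"
    by (rule inv_int[OF ok fm B _ t(2)]) auto
  also have "\<dots> = (\<integral>h. (\<integral>zu. g (fst zu) \<partial>(\<nu> (\<pi> t h) \<Otimes>\<^sub>M unif01)) \<partial>P \<nu> s)"
    unfolding s by (subst step_int[OF ok _ B]) (use fm s in auto)
  also have "\<dots> = (\<integral>h. (\<integral>z. g z \<partial>\<nu> (\<pi> t h)) \<partial>P \<nu> s)"
    by (rule Bochner_Integration.integral_cong[OF refl], rule fst_int[OF arm_in[OF ok t(1)] g])
  also have "\<dots> = (\<integral>h. (\<integral>z. g z \<partial>\<nu> (\<pi> t h)) \<partial>P \<nu> T)"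
    by (rule inv_int[OF ok Gm GB _ , symmetric]) (use s t in \<open>auto intro!: arg_cong[where f="\<lambda>k. integral\<^sup>L (\<nu> k) g"] pi_dep\<close>)
  finally show ?thesis .
qed


lemma AE_t:
  assumes b: "bandit_in m M K \<nu>" and t: "1 \<le> t" "t \<le> T"
  shows "AE h in P \<nu> T. fst (h t) \<in> {m..M}"
proof -
  note ok = bandit_ok[OF b]
  let ?g = "indicator (- {m..M}) :: real \<Rightarrow> real"
  have gm: "?g \<in> borel_measurable borel" by measurable
  have gB: "\<bar>?g x\<bar> \<le> 1" for x by (auto split: split_indicator)
  have inner: "(\<integral>z. ?g z \<partial>\<nu> (\<pi> t h)) = 0" for h
  proof -
    have d: "dist_in m M (\<nu> (\<pi> t h))" using b pi_range[OF t(1), of h] unfolding bandit_in_def by auto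
    show ?thesis
      by (rule integral_eq_zero_AE) (use dist_AE[OF d] in \<open>eventually_elim, auto split: split_indicator\<close>)
  qed
  have "(\<integral>h. ?g (fst (h t)) \<partial>P \<nu> T) = 0"
    using marg_t[OF ok gm gB t] inner by simp
  moreover have "integrable (P \<nu> T) (\<lambda>h. ?g (fst (h t)))"
    by (rule int_bounded[OF ok coord_meas[OF gm], where B=1]) (rule gB)
  ultimately have "AE h in P \<nu> T. ?g (fst (h t)) = 0"
    by (subst (asm) integral_nonneg_eq_0_iff_AE) auto
  then show ?thesis by eventually_elim (auto split: split_indicator_asm)
qed

lemma reward_sum:
  assumes b: "bandit_in m M K \<nu>"
  shows "(\<integral>h. (\<Sum>t\<in>{1..T}. fst (h t)) \<partial>P \<nu> T) = (\<Sum>t\<in>{1..T}. (\<integral>h. mean (\<nu> (\<pi> t h)) \<partial>P \<nu> T))"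
proof -
  note ok = bandit_ok[OF b]
  have "AE h in P \<nu> T. \<forall>t\<in>{1..T}. fst (h t) \<in> {m..M}"
    by (rule eventually_ball_finite) (use AE_t[OF b] in auto)
  note ae = this
  have "(\<lambda>h. (\<Sum>t\<in>{1..T}. fst (h t))) \<in> borel_measurable HS"
    by (intro borel_measurable_sum coord_meas[where g="\<lambda>x. x", simplified])
  then have m1: "(\<lambda>h. (\<Sum>t\<in>{1..T}. fst (h t))) \<in> borel_measurable (P \<nu> T)"
    by (subst measurable_cong_sets[OF P_sets[OF ok] refl])
  have "(\<lambda>h. (\<Sum>t\<in>{1..T}. clip m M (fst (h t)))) \<in> borel_measurable HS"
    by (intro borel_measurable_sum coord_meas) simp
  then have m2: "(\<lambda>h. (\<Sum>t\<in>{1..T}. clip m M (fst (h t)))) \<in> borel_measurable (P \<nu> T)"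
    by (subst measurable_cong_sets[OF P_sets[OF ok] refl])
  have ae2: "AE h in P \<nu> T. (\<Sum>t\<in>{1..T}. fst (h t)) = (\<Sum>t\<in>{1..T}. clip m M (fst (h t)))"
    using ae by eventually_elim (auto simp: clip_def intro!: sum.cong)
  have "(\<integral>h. (\<Sum>t\<in>{1..T}. fst (h t)) \<partial>P \<nu> T) = (\<integral>h. (\<Sum>t\<in>{1..T}. clip m M (fst (h t))) \<partial>P \<nu> T)"
    by (rule integral_cong_AE[OF m1 m2 ae2])
  also have "\<dots> = (\<Sum>t\<in>{1..T}. (\<integral>h. clip m M (fst (h t)) \<partial>P \<nu> T))"
    by (rule Bochner_Integration.integral_sum) (rule int_bounded[OF ok coord_meas[OF clip_meas] clip_bound])
  also have "\<dots> = (\<Sum>t\<in>{1..T}. (\<integral>h. mean (\<nu> (\<pi> t h)) \<partial>P \<nu> T))"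
  proof (rule sum.cong[OF refl])
    fix t assume t: "t \<in> {1..T}"
    have "(\<integral>h. clip m M (fst (h t)) \<partial>P \<nu> T) = (\<integral>h. (\<integral>z. clip m M z \<partial>\<nu> (\<pi> t h)) \<partial>P \<nu> T)"
      by (rule marg_t[OF ok clip_meas clip_bound]) (use t in auto)
    also have "\<dots> = (\<integral>h. mean (\<nu> (\<pi> t h)) \<partial>P \<nu> T)"
    proof (rule Bochner_Integration.integral_cong[OF refl])
      fix h
      have d: "dist_in m M (\<nu> (\<pi> t h))" using b pi_range[of t h] t unfolding bandit_in_def by auto
      show "(\<integral>z. clip m M z \<partial>\<nu> (\<pi> t h)) = mean (\<nu> (\<pi> t h))"
        using mean_clip[OF d] by simp
    qed
    finally show "(\<integral>h. clip m M (fst (h t)) \<partial>P \<nu> T) = (\<integral>h. mean (\<nu> (\<pi> t h)) \<partial>P \<nu> T)" .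
  qed
  finally show ?thesis .
qed

definition ind :: "nat \<Rightarrow> nat \<Rightarrow> (nat \<Rightarrow> real \<times> real) \<Rightarrow> real" where
  "ind a t h = (if \<pi> t h = a then 1 else 0)"

definition pulls :: "(nat \<Rightarrow> real measure) \<Rightarrow> nat \<Rightarrow> nat \<Rightarrow> real" where
  "pulls \<nu> T a = (\<integral>h. (\<Sum>t\<in>{1..T}. ind a t h) \<partial>P \<nu> T)"

lemma ind_meas: "t \<ge> 1 \<Longrightarrow> ind a t \<in> borel_measurable HS"
  unfolding ind_def[abs_def] by (rule comp_pi_meas[where g="\<lambda>k. if k = a then 1 else 0"])

lemma ind_bound: "\<bar>ind a t h\<bar> \<le> 1"
  unfolding ind_def by auto

lemma ind_int: "arms_ok K \<nu> \<Longrightarrow> t \<ge> 1 \<Longrightarrow> integrable (P \<nu> T) (ind a t)"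
  by (rule int_bounded[OF _ ind_meas ind_bound])

lemma pulls_sum: "arms_ok K \<nu> \<Longrightarrow> pulls \<nu> T a = (\<Sum>t\<in>{1..T}. (\<integral>h. ind a t h \<partial>P \<nu> T))"
  unfolding pulls_def by (rule Bochner_Integration.integral_sum) (auto intro: ind_int)

lemma ind_sum: "t \<ge> 1 \<Longrightarrow> (\<Sum>a\<in>{1..K}. ind a t h) = 1"
  unfolding ind_def using pi_range[of t h] by (simp add: sum.delta')

lemma ind_mean: "t \<ge> 1 \<Longrightarrow> mean (\<nu> (\<pi> t h)) = (\<Sum>a\<in>{1..K}. mean (\<nu> a) * ind a t h)"
  unfolding ind_def using pi_range[of t h] by (simp add: sum.delta' if_distrib cong: if_cong)

lemma regret_decomp:
  assumes b: "bandit_in m M K \<nu>"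
  shows "regret K \<pi> \<nu> T = (\<Sum>a\<in>{1..K}. gap K \<nu> a * pulls \<nu> T a)"
proof -
  note ok = bandit_ok[OF b]
  let ?p = "\<lambda>t a. (\<integral>h. ind a t h \<partial>P \<nu> T)"
  have p1: "(\<Sum>a\<in>{1..K}. ?p t a) = 1" if t: "t \<in> {1..T}" for t
  proof -
    have "(\<Sum>a\<in>{1..K}. ?p t a) = (\<integral>h. (\<Sum>a\<in>{1..K}. ind a t h) \<partial>P \<nu> T)"
      by (rule Bochner_Integration.integral_sum[symmetric]) (use t ok in \<open>auto intro: ind_int\<close>)
    also have "\<dots> = 1" using t ind_sum[of t] prob_space.prob_space[OF P_prob[OF ok]] by simp
    finally show ?thesis .
  qed
  have pm: "(\<integral>h. mean (\<nu> (\<pi> t h)) \<partial>P \<nu> T) = (\<Sum>a\<in>{1..K}. mean (\<nu> a) * ?p t a)" if t: "t \<in> {1..T}" for t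
  proof -
    have "(\<integral>h. mean (\<nu> (\<pi> t h)) \<partial>P \<nu> T) = (\<integral>h. (\<Sum>a\<in>{1..K}. mean (\<nu> a) * ind a t h) \<partial>P \<nu> T)"
      using t ind_mean[of t] by simp
    also have "\<dots> = (\<Sum>a\<in>{1..K}. mean (\<nu> a) * ?p t a)"
      by (subst Bochner_Integration.integral_sum) (use t ok in \<open>auto intro: ind_int\<close>)
    finally show ?thesis .
  qed
  have "regret K \<pi> \<nu> T = real T * best_mean K \<nu> - (\<Sum>t\<in>{1..T}. (\<Sum>a\<in>{1..K}. mean (\<nu> a) * ?p t a))"
    unfolding regret_def reward_sum[OF b] using pm by simp
  also have "real T * best_mean K \<nu> = (\<Sum>t\<in>{1..T}. (\<Sum>a\<in>{1..K}. best_mean K \<nu> * ?p t a))"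
    using p1 by (simp add: sum_distrib_left[symmetric])
  also have "(\<Sum>t\<in>{1..T}. (\<Sum>a\<in>{1..K}. best_mean K \<nu> * ?p t a)) - (\<Sum>t\<in>{1..T}. (\<Sum>a\<in>{1..K}. mean (\<nu> a) * ?p t a))
     = (\<Sum>t\<in>{1..T}. (\<Sum>a\<in>{1..K}. gap K \<nu> a * ?p t a))"
    by (simp add: gap_def sum_subtractf[symmetric] left_diff_distrib)
  also have "\<dots> = (\<Sum>a\<in>{1..K}. gap K \<nu> a * pulls \<nu> T a)"
    by (subst sum.swap) (simp add: pulls_sum[OF ok] sum_distrib_left)
  finally show ?thesis .
qed


lemma ker_meas_sub: "arms_ok K \<nu> \<Longrightarrow> ker \<nu> t \<in> P \<nu> s \<rightarrow>\<^sub>M subprob_algebra HS"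
  using measurable_prob_algebraD[OF ker_meas] measurable_cong_sets[OF P_sets refl] by blast

lemma nn_step:
  fixes f :: "_ \<Rightarrow> ennreal"
  assumes ok: "arms_ok K \<nu>" and f[measurable]: "f \<in> borel_measurable HS"
  shows "(\<integral>\<^sup>+h. f h \<partial>P \<nu> (Suc t)) = (\<integral>\<^sup>+h. (\<integral>\<^sup>+y. f y \<partial>ker \<nu> t h) \<partial>P \<nu> t)"
  unfolding hist_Suc by (rule nn_integral_bind[OF f ker_meas_sub[OF ok]])

lemma nn_ker:
  fixes f :: "_ \<Rightarrow> ennreal"
  assumes ok: "arms_ok K \<nu>" and f[measurable]: "f \<in> borel_measurable HS"
  shows "(\<integral>\<^sup>+y. f y \<partial>ker \<nu> t h) = (\<integral>\<^sup>+zu. f (h(Suc t := zu)) \<partial>(\<nu> (\<pi> (Suc t) h) \<Otimes>\<^sub>M unif01))"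
  unfolding ker_def by (rule nn_integral_distr[OF upd_meas_N[OF armN_in[OF ok]]]) simp

lemma nn_ker_meas:
  fixes f :: "_ \<Rightarrow> ennreal"
  assumes ok: "arms_ok K \<nu>" and f[measurable]: "f \<in> borel_measurable HS"
  shows "(\<lambda>h. \<integral>\<^sup>+y. f y \<partial>ker \<nu> t h) \<in> borel_measurable HS"
  by (rule measurable_compose[OF measurable_prob_algebraD[OF ker_meas[OF ok]] nn_integral_measurable_subprob_algebra[OF f]])

lemma arm_dom:
  fixes G :: "real \<times> real \<Rightarrow> ennreal"
  assumes N: "N \<in> space (prob_algebra borel)" and N': "N' \<in> space (prob_algebra borel)"
    and dom: "\<And>H. H \<in> borel_measurable borel \<Longrightarrow> ennreal c * (\<integral>\<^sup>+z. H z \<partial>N) \<le> (\<integral>\<^sup>+z. H z \<partial>N')"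
    and G: "G \<in> borel_measurable (borel \<Otimes>\<^sub>M borel)"
  shows "ennreal c * (\<integral>\<^sup>+zu. G zu \<partial>(N \<Otimes>\<^sub>M unif01)) \<le> (\<integral>\<^sup>+zu. G zu \<partial>(N' \<Otimes>\<^sub>M unif01))"
proof -
  interpret U: prob_space unif01 by (rule unif01_prob)
  have sN: "sets N = sets borel" and sN': "sets N' = sets borel" using N N' by (auto simp: space_prob_algebra)
  have GN: "G \<in> borel_measurable (N \<Otimes>\<^sub>M unif01)"
    using G by (subst measurable_cong_sets[OF sets_pair_measure_cong[OF sN sets_unif01] refl])
  have GN': "G \<in> borel_measurable (N' \<Otimes>\<^sub>M unif01)"
    using G by (subst measurable_cong_sets[OF sets_pair_measure_cong[OF sN' sets_unif01] refl])
  have Gb: "G \<in> borel_measurable (borel \<Otimes>\<^sub>M unif01)"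
    using G by (subst measurable_cong_sets[OF sets_pair_measure_cong[OF refl sets_unif01] refl])
  have Hm: "(\<lambda>z. \<integral>\<^sup>+u. G (z, u) \<partial>unif01) \<in> borel_measurable borel"
    by (rule U.borel_measurable_nn_integral_fst[OF Gb])
  have "ennreal c * (\<integral>\<^sup>+zu. G zu \<partial>(N \<Otimes>\<^sub>M unif01)) = ennreal c * (\<integral>\<^sup>+z. (\<integral>\<^sup>+u. G (z, u) \<partial>unif01) \<partial>N)"
    by (simp add: U.nn_integral_fst[OF GN])
  also have "\<dots> \<le> (\<integral>\<^sup>+z. (\<integral>\<^sup>+u. G (z, u) \<partial>unif01) \<partial>N')"
    by (rule dom[OF Hm])
  also have "\<dots> = (\<integral>\<^sup>+zu. G zu \<partial>(N' \<Otimes>\<^sub>M unif01))"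
    by (simp add: U.nn_integral_fst[OF GN'])
  finally show ?thesis .
qed

definition wt :: "real \<Rightarrow> nat \<Rightarrow> nat \<Rightarrow> (nat \<Rightarrow> real \<times> real) \<Rightarrow> real" where
  "wt \<epsilon> a T h = (\<Prod>t\<in>{1..T}. if \<pi> t h = a then 1 - \<epsilon> else 1)"

lemma wt_meas: "wt \<epsilon> a T \<in> borel_measurable HS"
  unfolding wt_def[abs_def]
  by (intro borel_measurable_prod comp_pi_meas[where g="\<lambda>k. if k = a then 1 - \<epsilon> else 1"]) auto

lemma wt_nonneg: "\<epsilon> \<le> 1 \<Longrightarrow> 0 \<le> wt \<epsilon> a T h"
  unfolding wt_def by (intro prod_nonneg) auto

lemma wt_Suc_upd: "wt \<epsilon> a (Suc T) (h(Suc T := zu)) = wt \<epsilon> a T h * (if \<pi> (Suc T) h = a then 1 - \<epsilon> else 1)"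
proof -
  have eq: "\<pi> t (h(Suc T := zu)) = \<pi> t h" if "t \<in> {1..Suc T}" for t
    by (rule pi_dep) (use that in auto)
  have "wt \<epsilon> a (Suc T) (h(Suc T := zu)) = wt \<epsilon> a (Suc T) h"
    unfolding wt_def by (rule prod.cong[OF refl]) (simp add: eq)
  also have "\<dots> = wt \<epsilon> a T h * (if \<pi> (Suc T) h = a then 1 - \<epsilon> else 1)"
    unfolding wt_def by (simp add: atLeastAtMostSuc_conv mult.commute)
  finally show ?thesis .
qed

lemma domination:
  fixes f :: "_ \<Rightarrow> ennreal"
  assumes ok: "arms_ok K \<nu>" and ok': "arms_ok K \<nu>'"
    and same: "\<And>b. b \<noteq> a \<Longrightarrow> \<nu>' b = \<nu> b"
    and dom: "\<And>H. H \<in> borel_measurable borel \<Longrightarrow> ennreal (1 - \<epsilon>) * (\<integral>\<^sup>+z. H z \<partial>\<nu> a) \<le> (\<integral>\<^sup>+z. H z \<partial>\<nu>' a)"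
    and eps: "\<epsilon> \<le> 1"
    and f: "f \<in> borel_measurable HS"
  shows "(\<integral>\<^sup>+h. ennreal (wt \<epsilon> a T h) * f h \<partial>P \<nu> T) \<le> (\<integral>\<^sup>+h. f h \<partial>P \<nu>' T)"
  using f
proof (induction T arbitrary: f)
  case 0
  then show ?case by (simp add: wt_def)
next
  case (Suc T)
  note fm[measurable] = Suc.prems
  let ?c = "\<lambda>h. (if \<pi> (Suc T) h = a then 1 - \<epsilon> else 1)"
  have kd: "ennreal (?c h) * (\<integral>\<^sup>+y. f y \<partial>ker \<nu> T h) \<le> (\<integral>\<^sup>+y. f y \<partial>ker \<nu>' T h)" for h
  proof (cases "\<pi> (Suc T) h = a")
    case True
    have G: "(\<lambda>zu. f (h(Suc T := zu))) \<in> borel_measurable (borel \<Otimes>\<^sub>M borel)"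
      using measurable_compose[OF measurable_Pair2[OF upd_measurable, of h "Suc T"] fm] by (simp add: space_HS)
    show ?thesis
      unfolding nn_ker[OF ok fm] nn_ker[OF ok' fm] using True
      by simp (rule arm_dom[OF _ _ dom G]; use True arm_in[OF ok, of "Suc T" h] arm_in[OF ok', of "Suc T" h] in simp)
  next
    case False
    then show ?thesis unfolding ker_def using same[OF False] by simp
  qed
  have "(\<integral>\<^sup>+h. ennreal (wt \<epsilon> a (Suc T) h) * f h \<partial>P \<nu> (Suc T))
      = (\<integral>\<^sup>+h. (\<integral>\<^sup>+y. ennreal (wt \<epsilon> a (Suc T) y) * f y \<partial>ker \<nu> T h) \<partial>P \<nu> T)"
    by (rule nn_step[OF ok]) (use wt_meas in measurable)
  also have "\<dots> = (\<integral>\<^sup>+h. ennreal (wt \<epsilon> a T h) * (ennreal (?c h) * (\<integral>\<^sup>+y. f y \<partial>ker \<nu> T h)) \<partial>P \<nu> T)"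
  proof (rule nn_integral_cong)
    fix h
    have "(\<integral>\<^sup>+y. ennreal (wt \<epsilon> a (Suc T) y) * f y \<partial>ker \<nu> T h)
        = (\<integral>\<^sup>+zu. ennreal (wt \<epsilon> a T h * ?c h) * f (h(Suc T := zu)) \<partial>(\<nu> (\<pi> (Suc T) h) \<Otimes>\<^sub>M unif01))"
      by (subst nn_ker[OF ok]) (use wt_meas in measurable, simp add: wt_Suc_upd)
    also have "\<dots> = ennreal (wt \<epsilon> a T h * ?c h) * (\<integral>\<^sup>+zu. f (h(Suc T := zu)) \<partial>(\<nu> (\<pi> (Suc T) h) \<Otimes>\<^sub>M unif01))"
      by (rule nn_integral_cmult) (rule measurable_compose[OF upd_meas_N[OF armN_in[OF ok]] fm])
    also have "\<dots> = ennreal (wt \<epsilon> a T h) * (ennreal (?c h) * (\<integral>\<^sup>+zu. f (h(Suc T := zu)) \<partial>(\<nu> (\<pi> (Suc T) h) \<Otimes>\<^sub>M unif01)))"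
    proof -
      have c0: "0 \<le> ?c h" using eps by auto
      show ?thesis by (subst ennreal_mult[OF wt_nonneg[OF eps] c0]) (simp only: mult.assoc)
    qed
    also have "\<dots> = ennreal (wt \<epsilon> a T h) * (ennreal (?c h) * (\<integral>\<^sup>+y. f y \<partial>ker \<nu> T h))"
      by (simp only: nn_ker[OF ok fm])
    finally show "(\<integral>\<^sup>+y. ennreal (wt \<epsilon> a (Suc T) y) * f y \<partial>ker \<nu> T h)
        = ennreal (wt \<epsilon> a T h) * (ennreal (?c h) * (\<integral>\<^sup>+y. f y \<partial>ker \<nu> T h))" .
  qed
  also have "\<dots> \<le> (\<integral>\<^sup>+h. ennreal (wt \<epsilon> a T h) * (\<integral>\<^sup>+y. f y \<partial>ker \<nu>' T h) \<partial>P \<nu> T)"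
    by (intro nn_integral_mono mult_left_mono kd) auto
  also have "\<dots> \<le> (\<integral>\<^sup>+h. (\<integral>\<^sup>+y. f y \<partial>ker \<nu>' T h) \<partial>P \<nu>' T)"
    by (rule Suc.IH[OF nn_ker_meas[OF ok' fm]])
  also have "\<dots> = (\<integral>\<^sup>+h. f h \<partial>P \<nu>' (Suc T))"
    by (rule nn_step[OF ok' fm, symmetric])
  finally show ?case .
qed


definition Nr :: "nat \<Rightarrow> nat \<Rightarrow> (nat \<Rightarrow> real \<times> real) \<Rightarrow> real" where
  "Nr a T h = (\<Sum>t\<in>{1..T}. ind a t h)"

lemma Nr_meas: "Nr a T \<in> borel_measurable HS"
  unfolding Nr_def[abs_def] by (intro borel_measurable_sum) (auto intro: ind_meas)

lemma Nr_bounds: "0 \<le> Nr a T h" "Nr a T h \<le> real T"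
proof -
  show "0 \<le> Nr a T h" unfolding Nr_def ind_def by (intro sum_nonneg) auto
  have "Nr a T h \<le> (\<Sum>t\<in>{1..T}. 1)" unfolding Nr_def ind_def by (intro sum_mono) auto
  then show "Nr a T h \<le> real T" by simp
qed

lemma Nr_abs: "\<bar>Nr a T h\<bar> \<le> real T"
  using Nr_bounds[of a T h] by auto

lemma pulls_Nr: "pulls \<nu> T a = (\<integral>h. Nr a T h \<partial>P \<nu> T)"
  unfolding pulls_def Nr_def ..

lemma wt_ge: "0 \<le> \<epsilon> \<Longrightarrow> \<epsilon> \<le> 1 \<Longrightarrow> 1 - \<epsilon> * Nr a T h \<le> wt \<epsilon> a T h"
proof -
  assume e: "0 \<le> \<epsilon>" "\<epsilon> \<le> 1"
  have "1 - (\<Sum>t\<in>{1..T}. \<epsilon> * ind a t h) \<le> (\<Prod>t\<in>{1..T}. 1 - \<epsilon> * ind a t h)"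
    by (rule prod_one_minus_ge) (use e in \<open>auto simp: ind_def\<close>)
  moreover have "(\<Prod>t\<in>{1..T}. 1 - \<epsilon> * ind a t h) = wt \<epsilon> a T h"
    unfolding wt_def ind_def by (rule prod.cong) auto
  ultimately show ?thesis by (simp add: Nr_def sum_distrib_left)
qed

lemma pulls_nonneg: "arms_ok K \<nu> \<Longrightarrow> 0 \<le> pulls \<nu> T a"
  unfolding pulls_Nr by (rule integral_nonneg_AE) (simp add: Nr_bounds)

lemma pulls_le: "arms_ok K \<nu> \<Longrightarrow> pulls \<nu> T a \<le> real T"
proof -
  assume ok: "arms_ok K \<nu>"
  interpret prob_space "P \<nu> T" by (rule P_prob[OF ok])
  have "pulls \<nu> T a \<le> (\<integral>h. real T \<partial>P \<nu> T)"
    unfolding pulls_Nr by (rule integral_mono) (auto intro: int_bounded[OF ok Nr_meas Nr_abs] Nr_bounds)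
  then show ?thesis by (simp add: prob_space)
qed

lemma pulls_total: "arms_ok K \<nu> \<Longrightarrow> (\<Sum>b\<in>{1..K}. pulls \<nu> T b) = real T"
proof -
  assume ok: "arms_ok K \<nu>"
  interpret prob_space "P \<nu> T" by (rule P_prob[OF ok])
  have "(\<Sum>b\<in>{1..K}. pulls \<nu> T b) = (\<integral>h. (\<Sum>b\<in>{1..K}. Nr b T h) \<partial>P \<nu> T)"
    unfolding pulls_Nr by (rule Bochner_Integration.integral_sum[symmetric]) (rule int_bounded[OF ok Nr_meas Nr_abs])
  also have "\<dots> = (\<integral>h. real T \<partial>P \<nu> T)"
  proof (rule Bochner_Integration.integral_cong[OF refl])
    fix h
    have "(\<Sum>b\<in>{1..K}. Nr b T h) = (\<Sum>t\<in>{1..T}. (\<Sum>b\<in>{1..K}. ind b t h))"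
      unfolding Nr_def by (rule sum.swap)
    also have "\<dots> = (\<Sum>t\<in>{1..T}. 1)" using ind_sum by (intro sum.cong) auto
    finally show "(\<Sum>b\<in>{1..K}. Nr b T h) = real T" by simp
  qed
  finally show ?thesis by (simp add: prob_space)
qed

lemma pulls_dom:
  assumes ok: "arms_ok K \<nu>" and ok': "arms_ok K \<nu>'"
    and same: "\<And>b. b \<noteq> a \<Longrightarrow> \<nu>' b = \<nu> b"
    and dom: "\<And>H. H \<in> borel_measurable borel \<Longrightarrow> ennreal (1 - \<epsilon>) * (\<integral>\<^sup>+z. H z \<partial>\<nu> a) \<le> (\<integral>\<^sup>+z. H z \<partial>\<nu>' a)"
    and eps: "0 \<le> \<epsilon>" "\<epsilon> \<le> 1"
  shows "real T - pulls \<nu> T a - \<epsilon> * real T * pulls \<nu> T a \<le> real T - pulls \<nu>' T a"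
proof -
  interpret P1: prob_space "P \<nu> T" by (rule P_prob[OF ok])
  interpret P2: prob_space "P \<nu>' T" by (rule P_prob[OF ok'])
  let ?g = "\<lambda>h. max 0 (1 - \<epsilon> * Nr a T h) * (real T - Nr a T h)"
  have Nm: "Nr a T \<in> borel_measurable HS" by (rule Nr_meas)
  have gm: "?g \<in> borel_measurable HS" using Nm by measurable
  have gB: "\<bar>?g h\<bar> \<le> real T" for h
  proof -
    have "0 \<le> max 0 (1 - \<epsilon> * Nr a T h)" "max 0 (1 - \<epsilon> * Nr a T h) \<le> 1"
      using eps Nr_bounds[of a T h] by auto
    moreover have "0 \<le> real T - Nr a T h" "real T - Nr a T h \<le> real T" using Nr_bounds[of a T h] by auto
    ultimately have "0 \<le> ?g h" "?g h \<le> 1 * real T"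
      by (simp, intro mult_mono, auto)
    then show ?thesis by simp
  qed
  have g0: "0 \<le> ?g h" for h using Nr_bounds[of a T h] by auto
  have fm: "(\<lambda>h. ennreal (real T - Nr a T h)) \<in> borel_measurable HS" using Nm by measurable
  have intD: "integrable (P \<nu>' T) (\<lambda>h. real T - Nr a T h)"
    by (rule int_bounded[OF ok', where B="real T"]) (use Nm Nr_bounds in auto)
  have "ennreal (\<integral>h. ?g h \<partial>P \<nu> T) = (\<integral>\<^sup>+h. ennreal (?g h) \<partial>P \<nu> T)"
    by (rule nn_integral_eq_integral[symmetric]) (auto intro: int_bounded[OF ok gm gB] g0)
  also have "\<dots> \<le> (\<integral>\<^sup>+h. ennreal (wt \<epsilon> a T h) * ennreal (real T - Nr a T h) \<partial>P \<nu> T)"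
  proof (rule nn_integral_mono)
    fix h
    have "?g h \<le> wt \<epsilon> a T h * (real T - Nr a T h)"
      using wt_ge[OF eps, of a T h] wt_nonneg[OF eps(2), of a T h] Nr_bounds[of a T h]
      by (intro mult_right_mono) auto
    then have "ennreal (?g h) \<le> ennreal (wt \<epsilon> a T h * (real T - Nr a T h))"
      by (rule ennreal_leI)
    also have "\<dots> = ennreal (wt \<epsilon> a T h) * ennreal (real T - Nr a T h)"
      by (rule ennreal_mult) (use wt_nonneg[OF eps(2), of a T h] Nr_bounds[of a T h] in auto)
    finally show "ennreal (?g h) \<le> ennreal (wt \<epsilon> a T h) * ennreal (real T - Nr a T h)" .
  qed
  also have "\<dots> \<le> (\<integral>\<^sup>+h. ennreal (real T - Nr a T h) \<partial>P \<nu>' T)"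
    by (rule domination[OF ok ok' same dom eps(2) fm])
  also have "\<dots> = ennreal (\<integral>h. real T - Nr a T h \<partial>P \<nu>' T)"
    by (rule nn_integral_eq_integral[OF intD]) (simp add: Nr_bounds)
  also have "(\<integral>h. real T - Nr a T h \<partial>P \<nu>' T) = real T - pulls \<nu>' T a"
    unfolding pulls_Nr
    by (subst Bochner_Integration.integral_diff) (auto simp: P2.prob_space intro: int_bounded[OF ok' Nr_meas Nr_abs])
  finally have A: "(\<integral>h. ?g h \<partial>P \<nu> T) \<le> real T - pulls \<nu>' T a"
    using pulls_le[OF ok', of T a] by (simp add: ennreal_le_iff)
  have "(\<integral>h. real T - Nr a T h - \<epsilon> * real T * Nr a T h \<partial>P \<nu> T) \<le> (\<integral>h. ?g h \<partial>P \<nu> T)"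
  proof (rule integral_mono)
    show "integrable (P \<nu> T) (\<lambda>h. real T - Nr a T h - \<epsilon> * real T * Nr a T h)"
      using int_bounded[OF ok Nr_meas[of a T] Nr_abs, where t=T] by auto
    show "integrable (P \<nu> T) ?g" by (rule int_bounded[OF ok gm gB])
    fix h
    have "real T - Nr a T h - \<epsilon> * real T * Nr a T h \<le> (1 - \<epsilon> * Nr a T h) * (real T - Nr a T h)"
      using eps Nr_bounds[of a T h] by (simp add: algebra_simps)
    also have "\<dots> \<le> ?g h"
      using Nr_bounds[of a T h] by (intro mult_right_mono) auto
    finally show "real T - Nr a T h - \<epsilon> * real T * Nr a T h \<le> ?g h" .
  qed
  moreover have "(\<integral>h. real T - Nr a T h - \<epsilon> * real T * Nr a T h \<partial>P \<nu> T) = real T - pulls \<nu> T a - \<epsilon> * real T * pulls \<nu> T a"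
    unfolding pulls_Nr using int_bounded[OF ok Nr_meas[of a T] Nr_abs, where t=T]
    by (simp add: P1.prob_space)
  ultimately show ?thesis using A by linarith
qed


lemma key_x:
  assumes b: "bandit_in m M K \<nu>" and mM: "m < M" and a: "a \<in> {1..K}" and e: "0 < \<epsilon>" "\<epsilon> \<le> 1"
    and sf: "scale_free_bound K \<pi> \<Phi>" and T: "T \<ge> 1"
    and x: "M \<le> x" "M - (1 - \<epsilon>) * mean (\<nu> a) \<le> \<epsilon> * x"
  shows "(\<epsilon> * x + (1 - \<epsilon>) * mean (\<nu> a) - M) * (real T - pulls \<nu> T a - \<epsilon> * real T * pulls \<nu> T a)
     \<le> (x - m) * \<Phi> T"
proof -
  note ok = bandit_ok[OF b]
  define \<nu>' where "\<nu>' = \<nu>(a := mix \<epsilon> x (\<nu> a))"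
  have da: "dist_in m M (\<nu> a)" using b a unfolding bandit_in_def by auto
  have Na: "\<nu> a \<in> space (prob_algebra borel)" using da unfolding dist_in_def by (simp add: space_prob_algebra)
  have e': "0 \<le> \<epsilon>" "\<epsilon> \<le> 1" using e by auto
  have b': "bandit_in m x K \<nu>'"
    unfolding bandit_in_def \<nu>'_def
    using b mix_dist[OF da _ x(1) e'] dist_widen[OF _ x(1)] mM unfolding bandit_in_def by auto
  note ok' = bandit_ok[OF b']
  have mx: "m < x" using mM x by auto
  let ?mu = "\<epsilon> * x + (1 - \<epsilon>) * mean (\<nu> a)"
  let ?D = "?mu - M"
  have mean_a: "mean (\<nu>' a) = ?mu"
    unfolding \<nu>'_def using mix_mean[OF da _ x(1) e'] mM by simp
  have mean_le: "mean (\<nu>' b) \<le> M" if "b \<in> {1..K}" "b \<noteq> a" for b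
    using mean_bounds(2)[of m M "\<nu> b"] b that mM unfolding bandit_in_def \<nu>'_def by auto
  have D0: "0 \<le> ?D" using x by simp
  have best: "best_mean K \<nu>' = ?mu"
    unfolding best_mean_def
  proof (rule Max_eqI)
    show "finite ((\<lambda>a. mean (\<nu>' a)) ` {1..K})" by simp
    fix y assume "y \<in> (\<lambda>a. mean (\<nu>' a)) ` {1..K}"
    then obtain b where bb: "b \<in> {1..K}" "y = mean (\<nu>' b)" by auto
    show "y \<le> ?mu"
    proof (cases "b = a")
      case True then show ?thesis using bb mean_a by simp
    next
      case False then show ?thesis using bb mean_le[of b] D0 by simp
    qed
  next
    show "?mu \<in> (\<lambda>a. mean (\<nu>' a)) ` {1..K}" using a mean_a by force
  qed
  have gapb: "?D \<le> gap K \<nu>' b" if "b \<in> {1..K}" "b \<noteq> a" for b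
    unfolding gap_def best using mean_le[OF that] by simp
  have gapa: "gap K \<nu>' a = 0" unfolding gap_def best mean_a by simp
  have "regret K \<pi> \<nu>' T = (\<Sum>b\<in>{1..K}. gap K \<nu>' b * pulls \<nu>' T b)"
    by (rule regret_decomp[OF b'])
  also have "\<dots> = (\<Sum>b\<in>{1..K} - {a}. gap K \<nu>' b * pulls \<nu>' T b)"
    using a gapa by (subst sum.remove[of _ a]) auto
  also have "\<dots> \<ge> (\<Sum>b\<in>{1..K} - {a}. ?D * pulls \<nu>' T b)"
    using gapb pulls_nonneg[OF ok'] by (intro sum_mono mult_right_mono) auto
  finally have r1: "?D * (\<Sum>b\<in>{1..K} - {a}. pulls \<nu>' T b) \<le> regret K \<pi> \<nu>' T"
    by (simp add: sum_distrib_left)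
  have "(\<Sum>b\<in>{1..K} - {a}. pulls \<nu>' T b) = real T - pulls \<nu>' T a"
    using pulls_total[OF ok', of T] a by (subst (asm) sum.remove[of _ a]) auto
  with r1 have r2: "?D * (real T - pulls \<nu>' T a) \<le> regret K \<pi> \<nu>' T" by simp
  have r3: "regret K \<pi> \<nu>' T \<le> (x - m) * \<Phi> T"
    using sf mx b' T unfolding scale_free_bound_def by auto
  have dom: "ennreal (1 - \<epsilon>) * (\<integral>\<^sup>+z. H z \<partial>\<nu> a) \<le> (\<integral>\<^sup>+z. H z \<partial>\<nu>' a)"
    if H: "H \<in> borel_measurable borel" for H
    unfolding \<nu>'_def using mix_nn[OF Na H e'] by simp
  have pd: "real T - pulls \<nu> T a - \<epsilon> * real T * pulls \<nu> T a \<le> real T - pulls \<nu>' T a"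
    by (rule pulls_dom[OF ok ok' _ dom e']) (simp add: \<nu>'_def)
  have "?D * (real T - pulls \<nu> T a - \<epsilon> * real T * pulls \<nu> T a) \<le> ?D * (real T - pulls \<nu>' T a)"
    by (rule mult_left_mono[OF pd D0])
  with r2 r3 show ?thesis by linarith
qed


lemma key:
  assumes b: "bandit_in m M K \<nu>" and mM: "m < M" and a: "a \<in> {1..K}" and e: "0 < \<epsilon>" "\<epsilon> \<le> 1"
    and sf: "scale_free_bound K \<pi> \<Phi>" and T: "T \<ge> 1"
  shows "\<epsilon> * (real T - pulls \<nu> T a - \<epsilon> * real T * pulls \<nu> T a) \<le> \<Phi> T"
proof (rule ccontr)
  define c where "c = real T - pulls \<nu> T a - \<epsilon> * real T * pulls \<nu> T a"
  define A0 where "A0 = M - (1 - \<epsilon>) * mean (\<nu> a)"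
  define R where "R = A0 * c - m * \<Phi> T"
  assume "\<not> \<epsilon> * (real T - pulls \<nu> T a - \<epsilon> * real T * pulls \<nu> T a) \<le> \<Phi> T"
  then have gt: "\<Phi> T < \<epsilon> * c" unfolding c_def by simp
  define d where "d = \<epsilon> * c - \<Phi> T"
  have d0: "0 < d" using gt unfolding d_def by simp
  define x where "x = max M (max (A0 / \<epsilon>) ((\<bar>R\<bar> + 1) / d))"
  have x1: "M \<le> x" unfolding x_def by simp
  have "A0 / \<epsilon> \<le> x" unfolding x_def by simp
  then have x2: "A0 \<le> \<epsilon> * x" using e by (simp add: field_simps)
  have "(\<bar>R\<bar> + 1) / d \<le> x" unfolding x_def by simp
  then have x3: "\<bar>R\<bar> + 1 \<le> x * d" using d0 by (simp add: field_simps)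
  have k: "(\<epsilon> * x + (1 - \<epsilon>) * mean (\<nu> a) - M) * c \<le> (x - m) * \<Phi> T"
    using key_x[OF b mM a e sf T x1] x2 unfolding A0_def c_def by simp
  have "x * d \<le> R"
    using k unfolding d_def R_def A0_def by (simp add: algebra_simps)
  with x3 show False by linarith
qed

lemma Phi_nonneg: "scale_free_bound K \<pi> \<Phi> \<Longrightarrow> 0 \<le> \<Phi> T"
  unfolding scale_free_bound_def by auto

lemma quarter_eps:
  fixes n T :: real
  assumes "0 < n"
  shows "(1 / (4 * n)) * (T - n - (1 / (4 * n)) * T * n) = 3 * T / (16 * n) - 1 / 4"
  using assms by (simp add: field_simps)

lemma arm_bound:
  assumes b: "bandit_in m M K \<nu>" and mM: "m < M" and a: "a \<in> {1..K}"
    and sf: "scale_free_bound K \<pi> \<Phi>" and T: "T \<ge> 1"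
  shows "pulls \<nu> T a < 1/4 \<Longrightarrow> 3 * real T / 4 - 1 / 4 \<le> \<Phi> T"
    and "1/4 \<le> pulls \<nu> T a \<Longrightarrow> 3 * real T / (16 * pulls \<nu> T a) - 1 / 4 \<le> \<Phi> T"
proof -
  let ?n = "pulls \<nu> T a"
  have n0: "0 \<le> ?n" by (rule pulls_nonneg[OF bandit_ok[OF b]])
  assume n: "?n < 1/4"
  have "1 * (real T - ?n - 1 * real T * ?n) \<le> \<Phi> T" by (rule key[OF b mM a _ _ sf T]) auto
  moreover have "real T * ?n \<le> real T * (1/4)" using n by (intro mult_left_mono) auto
  ultimately show "3 * real T / 4 - 1 / 4 \<le> \<Phi> T" using n by simp
next
  let ?n = "pulls \<nu> T a"
  assume n: "1/4 \<le> ?n"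
  have h: "(1 / (4 * ?n)) * (real T - ?n - (1 / (4 * ?n)) * real T * ?n) \<le> \<Phi> T"
    by (rule key[OF b mM a _ _ sf T]) (use n in \<open>auto simp: field_simps\<close>)
  have eq: "(1 / (4 * ?n)) * (real T - ?n - (1 / (4 * ?n)) * real T * ?n) = 3 * real T / (16 * ?n) - 1 / 4"
    by (rule quarter_eps) (use n in simp)
  from h eq show "3 * real T / (16 * ?n) - 1 / 4 \<le> \<Phi> T" by linarith
qed

lemma Phi_ge:
  assumes b: "bandit_in m M K \<nu>" and mM: "m < M" and K: "K \<ge> 2"
    and sf: "scale_free_bound K \<pi> \<Phi>" and T: "T \<ge> 1"
  shows "1/8 \<le> \<Phi> T"
proof -
  note ok = bandit_ok[OF b]
  have "pulls \<nu> T 1 + pulls \<nu> T 2 \<le> (\<Sum>b\<in>{1..K}. pulls \<nu> T b)"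
  proof -
    have "pulls \<nu> T 1 + pulls \<nu> T 2 = (\<Sum>b\<in>{1,2}. pulls \<nu> T b)" by simp
    also have "\<dots> \<le> (\<Sum>b\<in>{1..K}. pulls \<nu> T b)"
      using K pulls_nonneg[OF ok] by (intro sum_mono2) auto
    finally show ?thesis .
  qed
  then have sum2: "pulls \<nu> T 1 + pulls \<nu> T 2 \<le> real T" using pulls_total[OF ok] by simp
  obtain c where c: "c \<in> {1..K}" "pulls \<nu> T c \<le> real T / 2"
  proof (cases "pulls \<nu> T 1 \<le> real T / 2")
    case True then show ?thesis using that[of 1] K by auto
  next
    case False then show ?thesis using that[of 2] K sum2 by auto
  qed
  show ?thesis
  proof (cases "pulls \<nu> T c < 1/4")
    case True
    then show ?thesis using arm_bound(1)[OF b mM c(1) sf T] T by simp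
  next
    case False
    then have n: "1/4 \<le> pulls \<nu> T c" by simp
    have h: "3 * real T / (16 * pulls \<nu> T c) - 1 / 4 \<le> \<Phi> T" by (rule arm_bound(2)[OF b mM c(1) sf T n])
    have "3 / 8 \<le> 3 * real T / (16 * pulls \<nu> T c)" using n c(2) by (simp add: field_simps)
    with h show ?thesis by simp
  qed
qed

lemma pulls_lower:
  assumes b: "bandit_in m M K \<nu>" and mM: "m < M" and K: "K \<ge> 2" and a: "a \<in> {1..K}"
    and sf: "scale_free_bound K \<pi> \<Phi>" and T: "T \<ge> 1" and small: "\<Phi> T \<le> real T / 4"
  shows "real T / (16 * \<Phi> T) \<le> pulls \<nu> T a"
proof -
  let ?n = "pulls \<nu> T a"
  have P8: "1/8 \<le> \<Phi> T" by (rule Phi_ge[OF b mM K sf T])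
  show ?thesis
  proof (cases "real T / 2 \<le> ?n")
    case True
    have "real T / (16 * \<Phi> T) \<le> real T / 2" by (rule divide_left_mono) (use P8 in auto)
    with True show ?thesis by simp
  next
    case F: False
    show ?thesis
    proof (cases "?n < 1/4")
      case True
      then show ?thesis using arm_bound(1)[OF b mM a sf T] small T by simp
    next
      case False
      then have n: "1/4 \<le> ?n" by simp
      have "3 * real T / (16 * ?n) - 1 / 4 \<le> \<Phi> T" by (rule arm_bound(2)[OF b mM a sf T n])
      then have "3 * real T / (16 * ?n) \<le> 3 * \<Phi> T" using P8 by simp
      then have "real T / (16 * ?n) \<le> \<Phi> T" by simp
      then show ?thesis using n P8 by (simp add: field_simps)
    qed
  qed
qed

end


theorem theorem1:
  fixes K :: nat and \<pi> :: "nat \<Rightarrow> (nat \<Rightarrow> real \<times> real) \<Rightarrow> nat"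
    and \<Phi> :: "nat \<Rightarrow> real" and \<nu> :: "nat \<Rightarrow> real measure"
  assumes "K \<ge> 2"
    and "strategy K \<pi>"
    and "scale_free_bound K \<pi> \<Phi>"
    and "\<Phi> \<in> o(\<lambda>T. real T)"
    and "bandit_bounded K \<nu>"
  shows "Liminf sequentially (\<lambda>T. ereal (regret K \<pi> \<nu> T / (real T / \<Phi> T)))
           \<ge> ereal (1/16 * (\<Sum>a\<in>{1..K}. gap K \<nu> a))"
proof -
  interpret strat K \<pi> by unfold_locales (rule assms(2))
  obtain m M where mM: "m < M" and b: "bandit_in m M K \<nu>"
    using assms(5) unfolding bandit_bounded_def by auto
  note sf = assms(3)
  have ev: "eventually (\<lambda>T. norm (\<Phi> T) \<le> (1/4) * norm (real T)) at_top"
    by (rule landau_o.smallD[OF assms(4)]) simp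
  have gap0: "0 \<le> gap K \<nu> a" if "a \<in> {1..K}" for a
    unfolding gap_def best_mean_def using that by (simp add: Max_ge)
  let ?S = "\<Sum>a\<in>{1..K}. gap K \<nu> a"
  have "eventually (\<lambda>T. ereal (1/16 * ?S) \<le> ereal (regret K \<pi> \<nu> T / (real T / \<Phi> T))) sequentially"
    using ev eventually_ge_at_top[of 1]
  proof eventually_elim
    case (elim T)
    have small: "\<Phi> T \<le> real T / 4" using elim(1) by simp
    have T: "T \<ge> 1" using elim(2) by simp
    have P8: "1/8 \<le> \<Phi> T" by (rule Phi_ge[OF b mM assms(1) sf T])
    have "(\<Sum>a\<in>{1..K}. gap K \<nu> a * (real T / (16 * \<Phi> T))) \<le> (\<Sum>a\<in>{1..K}. gap K \<nu> a * pulls \<nu> T a)"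
      by (intro sum_mono mult_left_mono pulls_lower[OF b mM assms(1) _ sf T small] gap0) auto
    also have "\<dots> = regret K \<pi> \<nu> T" by (rule regret_decomp[OF b, symmetric])
    finally have r: "?S * (real T / (16 * \<Phi> T)) \<le> regret K \<pi> \<nu> T"
      unfolding sum_distrib_right .
    have pos: "0 < real T / \<Phi> T" using P8 T by simp
    have eq: "1/16 * ?S * (real T / \<Phi> T) = ?S * (real T / (16 * \<Phi> T))" by simp
    have "1/16 * ?S * (real T / \<Phi> T) \<le> regret K \<pi> \<nu> T" using r eq by linarith
    then have "1/16 * ?S \<le> regret K \<pi> \<nu> T / (real T / \<Phi> T)"
      by (rule pos_le_divide_eq[THEN iffD2, OF pos])
    then show ?case by simp
  qed
  then show ?thesis by (rule Liminf_bounded)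
qed

end
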